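(* Let $G$ be a finite group with $d(G) \geq 2$. Then $d(G/\mathrm{Cyc}(G)) = d(G)$.
   Context: For a finite group $H$, $d(H)$ denotes the minimal size of a generating set of $H$. The cycliciser of $G$ is $\mathrm{Cyc}(G) = \{c \in G \mid \langle c,g\rangle \text{ is cyclic for all } g \in G\}$; it is a normal subgroup of $G$. *)

theory Defs
  imports "HOL-Algebra.Algebra"
begin

definition min_gens :: "('a, 'b) monoid_scheme \<Rightarrow> nat" where
  "min_gens H = (LEAST n. \<exists>S. S \<subseteq> carrier H \<and> finite S \<and> card S = n
                              \<and> generate H S = carrier H)"

definition Cyc :: "('a, 'b) monoid_scheme \<Rightarrow> 'a set" where
  "Cyc G = {c \<in> carrier G. \<forall>g \<in> carrier G. cyclic_group (subgroup_generated G {c, g})}"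

end

theory Submission
  imports Defs
begin

lemma (in group) gen_sub:
  assumes "A \<subseteq> carrier G" "B \<subseteq> generate G A"
  shows "generate G B \<subseteq> generate G A"
  using generate_subgroup_incl[OF assms(2) generate_is_subgroup[OF assms(1)]] .

lemma (in group) gen_eqI:
  assumes "A \<subseteq> carrier G" "B \<subseteq> carrier G" "B \<subseteq> generate G A" "A \<subseteq> generate G B"
  shows "generate G A = generate G B"
  using gen_sub assms by blast

lemma (in group) gen_self: "generate G (carrier G) = carrier G"
  using generate_incl[of "carrier G"] generate.incl[of _ "carrier G" G] by blast

lemma (in group) cyc_two_iff:
  assumes "c \<in> carrier G" "g \<in> carrier G"
  shows "cyclic_group (subgroup_generated G {c, g}) \<longleftrightarrow>
         (\<exists>x\<in>carrier G. generate G {c, g} = generate G {x})"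
proof -
  let ?S = "subgroup_generated G {c, g}"
  have cS: "carrier ?S = generate G {c, g}"
    using assms by (simp add: carrier_subgroup_generated Int_absorb1)
  interpret S: group ?S by simp
  have "cyclic_group ?S \<longleftrightarrow> (\<exists>x\<in>carrier ?S. carrier ?S = range (\<lambda>n::int. x [^]\<^bsub>?S\<^esub> n))"
    by (rule S.cyclic_group)
  also have "\<dots> \<longleftrightarrow> (\<exists>x\<in>carrier ?S. carrier ?S = generate G {x})"
  proof (intro bex_cong refl)
    fix x assume x: "x \<in> carrier ?S"
    hence xc: "x \<in> carrier G" using carrier_subgroup_generated_subset by blast
    have "range (\<lambda>n::int. x [^]\<^bsub>?S\<^esub> n) = generate G {x}"
      using int_pow_subgroup_generated[OF x] generate_pow[OF xc] by auto
    then show "(carrier ?S = range (\<lambda>n::int. x [^]\<^bsub>?S\<^esub> n)) = (carrier ?S = generate G {x})"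
      by simp
  qed
  also have "\<dots> \<longleftrightarrow> (\<exists>x\<in>carrier G. generate G {c, g} = generate G {x})"
  proof
    assume "\<exists>x\<in>carrier ?S. carrier ?S = generate G {x}"
    then show "\<exists>x\<in>carrier G. generate G {c, g} = generate G {x}"
      using cS carrier_subgroup_generated_subset by blast
  next
    assume "\<exists>x\<in>carrier G. generate G {c, g} = generate G {x}"
    then obtain x where "x \<in> carrier G" "generate G {c, g} = generate G {x}" by blast
    then show "\<exists>x\<in>carrier ?S. carrier ?S = generate G {x}"
      using cS generate.incl[of x "{x}" G] by auto
  qed
  finally show ?thesis .
qed

lemma (in group) two_in_cyclic:
  assumes x: "x \<in> carrier G" and a: "a \<in> generate G {x}" and b: "b \<in> generate G {x}"
  shows "\<exists>y\<in>carrier G. generate G {a, b} = generate G {y}"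
proof -
  obtain m where m: "a = x [^] (m::int)" using a generate_pow[OF x] by blast
  obtain n where n: "b = x [^] (n::int)" using b generate_pow[OF x] by blast
  obtain u v where uv: "u * m + v * n = gcd m n" using bezout_int by blast
  define y where "y = x [^] gcd m n"
  have yc: "y \<in> carrier G" using x y_def by simp
  have ac: "a \<in> carrier G" "b \<in> carrier G" using m n x by auto
  have "y = a [^] u \<otimes> b [^] v"
    using x by (simp add: y_def m n int_pow_pow int_pow_mult[symmetric] uv[symmetric] mult.commute)
  hence "y \<in> generate G {a, b}"
    using generate.eng[of "a [^] u" G "{a,b}" "b [^] v"]
      subgroup_int_pow_closed[OF generate_is_subgroup[of "{a,b}"], of a u]
      subgroup_int_pow_closed[OF generate_is_subgroup[of "{a,b}"], of b v]
      generate.incl[of a "{a,b}" G] generate.incl[of b "{a,b}" G] ac by auto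
  moreover have "a = y [^] (m div gcd m n)" "b = y [^] (n div gcd m n)"
    using x by (simp_all add: y_def m n int_pow_pow)
  hence "a \<in> generate G {y}" "b \<in> generate G {y}"
    using generate_pow[OF yc] by auto
  ultimately show ?thesis
    using yc ac by (intro bexI[of _ y] gen_eqI) auto
qed

lemma (in group) Cyc_iff:
  "c \<in> Cyc G \<longleftrightarrow> c \<in> carrier G \<and>
     (\<forall>g\<in>carrier G. \<exists>x\<in>carrier G. generate G {c, g} = generate G {x})"
  unfolding Cyc_def using cyc_two_iff by auto

lemma (in group) Cyc_central:
  assumes "c \<in> Cyc G" "g \<in> carrier G"
  shows "c \<otimes> g = g \<otimes> c"
proof -
  obtain x where x: "x \<in> carrier G" "generate G {c, g} = generate G {x}"
    using assms Cyc_iff by blast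
  have cg: "c \<in> carrier G" using assms Cyc_iff by blast
  have "c \<in> generate G {x}" "g \<in> generate G {x}"
    using x(2) generate.incl[of c "{c,g}" G] generate.incl[of g "{c,g}" G] by auto
  then obtain m n where "c = x [^] (m::int)" "g = x [^] (n::int)"
    using generate_pow[OF x(1)] by blast
  then show ?thesis using x(1) by (simp add: int_pow_mult[symmetric] add.commute)
qed

lemma (in group) Cyc_subgroup: "subgroup (Cyc G) G"
proof
  show "Cyc G \<subseteq> carrier G" unfolding Cyc_def by blast
next
  show "\<one> \<in> Cyc G"
    unfolding Cyc_iff
  proof (intro conjI ballI)
    fix g assume g: "g \<in> carrier G"
    have "generate G {\<one>, g} = generate G {g}"
      using g generate.one[of G "{g}"] generate.incl[of g "{\<one>, g}" G] generate.incl[of g "{g}" G]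
      by (intro gen_eqI) auto
    then show "\<exists>x\<in>carrier G. generate G {\<one>, g} = generate G {x}" using g by blast
  qed simp
next
  fix c assume c: "c \<in> Cyc G"
  have cc: "c \<in> carrier G" using c Cyc_iff by blast
  show "inv c \<in> Cyc G"
    unfolding Cyc_iff
  proof (intro conjI ballI)
    fix g assume g: "g \<in> carrier G"
    obtain x where x: "x \<in> carrier G" "generate G {c, g} = generate G {x}"
      using c g Cyc_iff by blast
    have "generate G {inv c, g} = generate G {c, g}"
    proof (rule gen_eqI)
      show "{c, g} \<subseteq> generate G {inv c, g}"
        using generate_m_inv_closed[of "{inv c, g}" "inv c"] generate.incl[of "inv c" "{inv c, g}" G]
          generate.incl[of g "{inv c, g}" G] cc g by auto
      show "{inv c, g} \<subseteq> generate G {c, g}"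
        using generate_m_inv_closed[of "{c, g}" c] generate.incl[of c "{c, g}" G]
          generate.incl[of g "{c, g}" G] cc g by auto
    qed (use cc g in auto)
    then show "\<exists>x\<in>carrier G. generate G {inv c, g} = generate G {x}" using x by auto
  qed (use cc in simp)
next
  fix c1 c2 assume c1: "c1 \<in> Cyc G" and c2: "c2 \<in> Cyc G"
  have cc: "c1 \<in> carrier G" "c2 \<in> carrier G" using c1 c2 Cyc_iff by auto
  show "c1 \<otimes> c2 \<in> Cyc G"
    unfolding Cyc_iff
  proof (intro conjI ballI)
    fix g assume g: "g \<in> carrier G"
    obtain h where h: "h \<in> carrier G" "generate G {c1, g} = generate G {h}"
      using c1 g Cyc_iff by blast
    obtain k where k: "k \<in> carrier G" "generate G {c2, h} = generate G {k}"
      using c2 h Cyc_iff by blast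
    have hk: "generate G {h} \<subseteq> generate G {k}"
      using k h generate.incl[of h "{c2,h}" G] by (intro gen_sub) auto
    have "c1 \<in> generate G {k}" "g \<in> generate G {k}" "c2 \<in> generate G {k}"
      using hk h(2) k(2) generate.incl[of c1 "{c1,g}" G] generate.incl[of g "{c1,g}" G]
        generate.incl[of c2 "{c2,h}" G] by auto
    hence "c1 \<otimes> c2 \<in> generate G {k}" "g \<in> generate G {k}"
      using generate.eng by auto
    then show "\<exists>x\<in>carrier G. generate G {c1 \<otimes> c2, g} = generate G {x}"
      using two_in_cyclic[OF k(1)] by blast
  qed (use cc in simp)
qed

lemma (in group) Cyc_normal: "Cyc G \<lhd> G"
  unfolding normal_inv_iff
proof (intro conjI ballI)
  fix x h assume x: "x \<in> carrier G" and h: "h \<in> Cyc G"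
  have hc: "h \<in> carrier G" using h Cyc_iff by blast
  have "x \<otimes> h \<otimes> inv x = h \<otimes> x \<otimes> inv x" using Cyc_central[OF h x] by simp
  also have "\<dots> = h" using x hc by (simp add: m_assoc)
  finally show "x \<otimes> h \<otimes> inv x \<in> Cyc G" using h by simp
qed (rule Cyc_subgroup)

lemma (in group) absorb:
  assumes "finite D" "D \<subseteq> Cyc G" "x \<in> carrier G"
  shows "\<exists>y\<in>carrier G. generate G (insert x D) = generate G {y}"
  using assms(1,2)
proof (induction D rule: finite_induct)
  case empty
  then show ?case using assms(3) by blast
next
  case (insert c D)
  obtain y where y: "y \<in> carrier G" "generate G (insert x D) = generate G {y}"
    using insert by blast
  have cC: "c \<in> Cyc G" using insert by blast
  have DC: "insert x (insert c D) \<subseteq> carrier G"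
    using insert assms(3) Cyc_subgroup subgroup.subset by blast
  obtain z where z: "z \<in> carrier G" "generate G {c, y} = generate G {z}"
    using cC y Cyc_iff by blast
  have yz: "generate G {y} \<subseteq> generate G {z}"
    using z generate.incl[of y "{c,y}" G] by (intro gen_sub) auto
  have "generate G (insert x (insert c D)) = generate G {z}"
  proof (rule gen_eqI)
    show "insert x (insert c D) \<subseteq> generate G {z}"
    proof -
      have "insert x D \<subseteq> generate G {z}"
        using y(2) yz generate.incl[of _ "insert x D" G] by blast
      moreover have "c \<in> generate G {z}" using z(2) generate.incl[of c "{c,y}" G] by auto
      ultimately show ?thesis by blast
    qed
    have "y \<in> generate G (insert x (insert c D))"
      using y(2) generate.incl[of y "{y}" G] mono_generate[of "insert x D" "insert x (insert c D)"]
      by auto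
    hence "generate G {c, y} \<subseteq> generate G (insert x (insert c D))"
      using DC generate.incl[of c "insert x (insert c D)" G] by (intro gen_sub) auto
    then show "{z} \<subseteq> generate G (insert x (insert c D))"
      using z(2) generate.incl[of z "{z}" G] by auto
  qed (use DC z in auto)
  then show ?case using z by blast
qed

lemma min_gens_le:
  assumes "S \<subseteq> carrier H" "finite S" "generate H S = carrier H"
  shows "min_gens H \<le> card S"
  unfolding min_gens_def using assms by (intro Least_le) blast

lemma min_gens_ex:
  assumes "group H" "finite (carrier H)"
  shows "\<exists>S. S \<subseteq> carrier H \<and> finite S \<and> card S = min_gens H \<and> generate H S = carrier H"
proof -
  have "\<exists>S. S \<subseteq> carrier H \<and> finite S \<and> card S = card (carrier H) \<and> generate H S = carrier H"
    using assms group.gen_self by blast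
  then have "\<exists>n. \<exists>S. S \<subseteq> carrier H \<and> finite S \<and> card S = n \<and> generate H S = carrier H" by blast
  then show ?thesis unfolding min_gens_def by (rule LeastI_ex)
qed

theorem lemma2p3:
  fixes G :: "('a, 'b) monoid_scheme"
  assumes "group G" and "finite (carrier G)" and "min_gens G \<ge> 2"
  shows "min_gens (G Mod Cyc G) = min_gens G"
proof -
  interpret G: group G by fact
  let ?C = "Cyc G"
  let ?Q = "G Mod ?C"
  let ?h = "\<lambda>a. ?C #>\<^bsub>G\<^esub> a"
  have N: "?C \<lhd> G" by (rule G.Cyc_normal)
  have sgC: "subgroup ?C G" by (rule G.Cyc_subgroup)
  have Qg: "group ?Q" using N normal.factorgroup_is_group by blast
  have hom: "group_hom G ?Q ?h"
    using N Qg normal.r_coset_hom_Mod[OF N] assms(1) by (simp add: group_hom_def group_hom_axioms_def)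
  have cQ: "carrier ?Q = ?h ` carrier G" by (rule carrier_FactGroup)
  have Qfin: "finite (carrier ?Q)" using cQ assms(2) by simp
  have le1: "min_gens ?Q \<le> min_gens G"
  proof -
    obtain S where S: "S \<subseteq> carrier G" "finite S" "card S = min_gens G" "generate G S = carrier G"
      using min_gens_ex[OF assms(1,2)] by blast
    have "generate ?Q (?h ` S) = carrier ?Q"
      using group_hom.generate_img[OF hom S(1)] S(4) cQ by simp
    moreover have "?h ` S \<subseteq> carrier ?Q" using S(1) cQ by auto
    ultimately have "min_gens ?Q \<le> card (?h ` S)" using S(2) by (intro min_gens_le) auto
    also have "\<dots> \<le> card S" using S(2) by (rule card_image_le)
    finally show ?thesis using S(3) by simp
  qed
  have le2: "min_gens G \<le> min_gens ?Q"
  proof -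
    obtain T where T: "T \<subseteq> carrier ?Q" "finite T" "card T = min_gens ?Q" "generate ?Q T = carrier ?Q"
      using min_gens_ex[OF Qg Qfin] by blast
    have "\<forall>t\<in>T. \<exists>x\<in>carrier G. t = ?h x" using T(1) cQ by auto
    then obtain r where r: "\<And>t. t \<in> T \<Longrightarrow> r t \<in> carrier G \<and> t = ?h (r t)" by metis
    define R where "R = r ` T"
    have RG: "R \<subseteq> carrier G" using r R_def by auto
    have TR: "T = ?h ` R" using r R_def by force
    have Rfin: "finite R" using R_def T(2) by simp
    have cardR: "card R \<le> card T" using R_def T(2) card_image_le by blast
    have CG: "?C \<subseteq> carrier G" using sgC subgroup.subset by blast
    have genRC: "generate G (R \<union> ?C) = carrier G"
    proof
      show "generate G (R \<union> ?C) \<subseteq> carrier G" using RG CG G.generate_incl by blast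
    next
      show "carrier G \<subseteq> generate G (R \<union> ?C)"
      proof
        fix g assume g: "g \<in> carrier G"
        have "?h g \<in> generate ?Q (?h ` R)" using T(4) TR cQ g by auto
        then obtain y where y: "y \<in> generate G R" "?h g = ?h y"
          using group_hom.generate_img[OF hom RG] by auto
        have yc: "y \<in> carrier G" using y(1) RG G.generate_incl by blast
        have "g \<in> ?C #>\<^bsub>G\<^esub> y" using G.repr_independenceD[OF sgC g] y(2) by simp
        then obtain c where c: "c \<in> ?C" "g = c \<otimes>\<^bsub>G\<^esub> y" unfolding r_coset_def by blast
        have "c \<in> generate G (R \<union> ?C)" using c(1) generate.incl[of c "R \<union> ?C" G] by blast
        moreover have "y \<in> generate G (R \<union> ?C)" using y(1) G.mono_generate[of R "R \<union> ?C"] by blast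
        ultimately show "g \<in> generate G (R \<union> ?C)" using c(2) generate.eng by metis
      qed
    qed
    have Cfin: "finite ?C" using CG assms(2) finite_subset by blast
    show ?thesis
    proof (cases "R = {}")
      case True
      obtain y where y: "y \<in> carrier G" "generate G (insert \<one>\<^bsub>G\<^esub> ?C) = generate G {y}"
        using G.absorb[OF Cfin subset_refl G.one_closed] by blast
      have "carrier G \<subseteq> generate G {y}"
        using genRC True y(2) G.mono_generate[of ?C "insert \<one>\<^bsub>G\<^esub> ?C"] by auto
      hence "generate G {y} = carrier G" using y(1) G.generate_incl[of "{y}"] by auto
      hence "min_gens G \<le> card {y}" using y(1) by (intro min_gens_le) auto
      then show ?thesis using assms(3) by simp
    next
      case False
      then obtain x where x: "x \<in> R" by blast
      have xc: "x \<in> carrier G" using x RG by blast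
      obtain y where y: "y \<in> carrier G" "generate G (insert x ?C) = generate G {y}"
        using G.absorb[OF Cfin subset_refl xc] by blast
      define R' where "R' = insert y (R - {x})"
      have R'G: "R' \<subseteq> carrier G" using R'_def RG y(1) by auto
      have "generate G {y} \<subseteq> generate G R'"
        using R'G R'_def generate.incl[of y R' G] by (intro G.gen_sub) auto
      hence "insert x ?C \<subseteq> generate G R'"
        using y(2) generate.incl[of _ "insert x ?C" G] by blast
      moreover have "R - {x} \<subseteq> generate G R'"
        using R'_def generate.incl[of _ R' G] by blast
      ultimately have "R \<union> ?C \<subseteq> generate G R'" by blast
      hence "carrier G \<subseteq> generate G R'" using genRC G.gen_sub[OF R'G] by blast
      hence "generate G R' = carrier G" using G.generate_incl[OF R'G] by blast
      hence "min_gens G \<le> card R'" using R'G R'_def Rfin by (intro min_gens_le) auto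
      also have "card R' \<le> card R"
      proof -
        have "card R' \<le> Suc (card (R - {x}))" unfolding R'_def using Rfin card_insert_le_m1
          by (simp add: card_insert_if)
        also have "\<dots> = card R" using x Rfin by (metis card_Suc_Diff1)
        finally show ?thesis .
      qed
      finally show ?thesis using cardR T(3) by simp
    qed
  qed
  show ?thesis using le1 le2 by simp
qed

end
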